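(* Let $a,b,c\in\mathbb{R}^n$. Then the set $\{X\in\mathbb{S}^n_+:\ a^\top Xc\ge 0,\ b^\top Xc\ge 0\}$ is rank-one generated.
   Context: $\mathbb{S}^n_+$ is the cone of real symmetric positive semidefinite $n\times n$ matrices. A closed convex cone $\mathcal{S}\subseteq\mathbb{S}^n_+$ is rank-one generated (ROG) if $\mathcal{S}=\mathrm{conv}(\mathcal{S}\cap\{xx^\top:x\in\mathbb{R}^n\})$. *)

theory Defs
  imports "HOL-Analysis.Analysis"
begin

definition psd_cone :: "(real^'n^'n) set" where
  "psd_cone = {X. transpose X = X \<and> (\<forall>x. 0 \<le> x \<bullet> (X *v x))}"

definition outer :: "real^'n \<Rightarrow> real^'n^'n" where
  "outer x = (\<chi> i j. x $ i * x $ j)"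

definition rank_one_mats :: "(real^'n^'n) set" where
  "rank_one_mats = {outer x | x. True}"

definition ROG :: "(real^'n^'n) set \<Rightarrow> bool" where
  "ROG S \<longleftrightarrow> S \<subseteq> psd_cone \<and> closed S \<and> convex S \<and> cone S
      \<and> S = convex hull (S \<inter> rank_one_mats)"

end

theory Submission
  imports Defs
begin

lemma outer_mult: "outer x *v v = (x \<bullet> v) *\<^sub>R x"
  by (simp add: vec_eq_iff outer_def matrix_vector_mult_def inner_vec_def sum_distrib_left sum_distrib_right mult_ac)

lemma transpose_outer: "transpose (outer x) = outer x"
  by (simp add: vec_eq_iff outer_def transpose_def mult.commute)

lemma sym_inner: "transpose X = X \<Longrightarrow> v \<bullet> (X *v w) = w \<bullet> ((X::real^'n^'n) *v v)"
  by (metis dot_lmul_matrix inner_commute transpose_matrix_vector)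

lemma outer_psd: "outer x \<in> psd_cone"
  by (simp add: psd_cone_def transpose_outer outer_mult inner_commute)

lemma outer_scale: "0 \<le> c \<Longrightarrow> c *\<^sub>R outer x = outer (sqrt c *\<^sub>R x)"
  by (simp add: vec_eq_iff outer_def mult_ac)

lemma outer_zero: "outer 0 = 0"
  by (simp add: vec_eq_iff outer_def)

lemma psd_add: "X \<in> psd_cone \<Longrightarrow> Y \<in> psd_cone \<Longrightarrow> X + Y \<in> psd_cone"
  by (auto simp: psd_cone_def algebra_simps transpose_def vec_eq_iff inner_add_right add_nonneg_nonneg)

lemma psd_scale: "X \<in> psd_cone \<Longrightarrow> 0 \<le> c \<Longrightarrow> c *\<^sub>R X \<in> psd_cone"
  by (auto simp: psd_cone_def transpose_def vec_eq_iff scaleR_matrix_vector_assoc[symmetric])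

lemma psd_zero:
  assumes X: "X \<in> psd_cone" and e: "e \<bullet> (X *v e) = 0"
  shows "X *v e = 0"
proof -
  have sym: "transpose X = X" and pos: "\<And>x. 0 \<le> x \<bullet> (X *v x)" using X by (auto simp: psd_cone_def)
  define w where "w = X *v e"
  have key: "0 \<le> w \<bullet> (X *v w) + 2 * t * (w \<bullet> w)" for t :: real
  proof -
    have "0 \<le> (w + t *\<^sub>R e) \<bullet> (X *v (w + t *\<^sub>R e))" by (rule pos)
    also have "\<dots> = w \<bullet> (X *v w) + t * (w \<bullet> (X *v e)) + t * (e \<bullet> (X *v w)) + t * t * (e \<bullet> (X *v e))"
      by (simp add: algebra_simps inner_add_left inner_add_right)
    also have "e \<bullet> (X *v w) = w \<bullet> (X *v e)" using sym_inner[OF sym] by simp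
    finally show ?thesis using e by (simp add: w_def algebra_simps)
  qed
  have "w \<bullet> w = 0"
  proof (rule ccontr)
    assume "w \<bullet> w \<noteq> 0"
    hence p: "w \<bullet> w > 0" by (simp add: order_less_le)
    have "0 \<le> w \<bullet> (X *v w) + 2 * (- (w \<bullet> (X *v w) + 1) / (2 * (w \<bullet> w))) * (w \<bullet> w)" by (rule key)
    also have "\<dots> = -1" using p by (simp add: field_simps)
    finally show False by simp
  qed
  thus ?thesis by (simp add: w_def)
qed

lemma step:
  assumes X: "X \<in> psd_cone" and sp: "0 < e \<bullet> (X *v e)"
    and y: "y = (1 / sqrt (e \<bullet> (X *v e))) *\<^sub>R (X *v e)"
  shows "X - outer y \<in> psd_cone" "(X - outer y) *v e = 0"
    "\<And>v. X *v v = 0 \<Longrightarrow> (X - outer y) *v v = 0"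
proof -
  have sym: "transpose X = X" and pos: "\<And>x. 0 \<le> x \<bullet> (X *v x)" using X by (auto simp: psd_cone_def)
  define s where "s = e \<bullet> (X *v e)"
  have s: "0 < s" using sp s_def by simp
  have ss: "sqrt s * sqrt s = s" using s by simp
  have yv: "y \<bullet> v = (v \<bullet> (X *v e)) / sqrt s" for v
    by (simp add: y s_def inner_commute)
  have Rv: "(X - outer y) *v v = X *v v - (y \<bullet> v) *\<^sub>R y" for v
    by (simp add: matrix_vector_mult_diff_rdistrib outer_mult)
  show "(X - outer y) *v e = 0"
    unfolding Rv yv using s ss by (simp add: y s_def[symmetric] scaleR_scaleR)
  show "(X - outer y) *v v = 0" if "X *v v = 0" for v
  proof -
    have "v \<bullet> (X *v e) = e \<bullet> (X *v v)" using sym_inner[OF sym] by simp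
    thus ?thesis unfolding Rv yv using that by simp
  qed
  have symR: "transpose (X - outer y) = X - outer y"
    using sym transpose_outer[of y] by (simp add: vec_eq_iff transpose_def)
  have "0 \<le> v \<bullet> ((X - outer y) *v v)" for v
  proof -
    define p where "p = v \<bullet> (X *v e)"
    define t where "t = p / s"
    have "0 \<le> (v - t *\<^sub>R e) \<bullet> (X *v (v - t *\<^sub>R e))" by (rule pos)
    also have "\<dots> = v \<bullet> (X *v v) - t * (v \<bullet> (X *v e)) - t * (e \<bullet> (X *v v)) + t * t * (e \<bullet> (X *v e))"
      by (simp add: algebra_simps inner_diff_left inner_diff_right)
    also have "e \<bullet> (X *v v) = p" using sym_inner[OF sym] p_def by simp
    also have "v \<bullet> (X *v v) - t * (v \<bullet> (X *v e)) - t * p + t * t * (e \<bullet> (X *v e)) = v \<bullet> (X *v v) - p * p / s"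
      using s by (simp add: t_def p_def[symmetric] s_def[symmetric] field_simps)
    also have "\<dots> = v \<bullet> (X *v v) - (y \<bullet> v) * (y \<bullet> v)"
    proof -
      have "p = sqrt s * (y \<bullet> v)" using yv[of v] s by (simp add: p_def)
      then have "p * p / s = (y \<bullet> v) * (y \<bullet> v)" using ss s by (simp add: field_simps)
      thus ?thesis by simp
    qed
    also have "\<dots> = v \<bullet> ((X - outer y) *v v)"
      by (simp add: Rv inner_diff_right inner_commute[of v y])
    finally show ?thesis .
  qed
  thus "X - outer y \<in> psd_cone" using symR by (simp add: psd_cone_def)
qed

lemma mat_zero: "(\<forall>i. (X::real^'n^'n) *v axis i 1 = 0) \<Longrightarrow> X = 0"
proof -
  assume h: "\<forall>i. X *v axis i 1 = 0"
  have "(X *v axis j 1) $ i = X $ i $ j" for i j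
    by (simp add: matrix_vector_mult_def axis_def if_distrib cong: if_cong)
  thus ?thesis using h by (simp add: vec_eq_iff)
qed

lemma decomp:
  "finite I \<Longrightarrow> X \<in> psd_cone \<Longrightarrow> (\<forall>i. i \<notin> I \<longrightarrow> X *v axis i 1 = 0) \<Longrightarrow> \<exists>xs. X = sum_list (map outer xs)"
proof (induction I arbitrary: X rule: finite_induct)
  case empty
  then have "X = 0" using mat_zero by blast
  then show ?case by (intro exI[of _ "[]"]) simp
next
  case (insert i I)
  define e :: "real^'a" where "e = axis i 1"
  show ?case
  proof (cases "e \<bullet> (X *v e) = 0")
    case True
    then have "X *v e = 0" using psd_zero insert by blast
    then show ?thesis using insert e_def by (metis insert_iff)
  next
    case False
    then have sp: "0 < e \<bullet> (X *v e)" using insert(4) by (simp add: psd_cone_def order_less_le)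
    define y where "y = (1 / sqrt (e \<bullet> (X *v e))) *\<^sub>R (X *v e)"
    note st = step[OF insert(4) sp y_def]
    have "\<forall>j. j \<notin> I \<longrightarrow> (X - outer y) *v axis j 1 = 0"
      using st(2,3) insert(5) e_def by (metis insert_iff)
    then obtain xs where "X - outer y = sum_list (map outer xs)" using insert(3) st(1) by blast
    then have "X = sum_list (map outer (y # xs))" by (simp add: algebra_simps)
    then show ?thesis by blast
  qed
qed

lemma quad_sum: "v \<bullet> (sum_list (map outer xs) *v v) = sum_list (map (\<lambda>x. (x \<bullet> v)^2) xs)"
  by (induction xs) (auto simp: matrix_vector_mult_add_rdistrib outer_mult inner_add_right power2_eq_square inner_commute)

lemma zero_each: "sum_list (map (\<lambda>x. (x \<bullet> v)^2) xs) = 0 \<Longrightarrow> x \<in> set xs \<Longrightarrow> x \<bullet> v = 0"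
proof (induction xs)
  case Nil then show ?case by simp
next
  case (Cons z zs)
  have n: "0 \<le> sum_list (map (\<lambda>x. (x \<bullet> v)^2) zs)" by (rule sum_list_nonneg) auto
  have "(z \<bullet> v)^2 = 0" "sum_list (map (\<lambda>x. (x \<bullet> v)^2) zs) = 0"
    using Cons.prems(1) n by (smt (verit) list.simps(9) sum_list.Cons zero_le_power2)+
  then show ?case using Cons by auto
qed

lemma lin_mv: "linear (\<lambda>X::real^'n^'m. X *v x)"
  by (rule linearI) (simp_all add: matrix_vector_mult_add_rdistrib scaleR_matrix_vector_assoc)

lemma cont_form: "continuous_on UNIV (\<lambda>X::real^'n^'n. a \<bullet> (X *v c))"
proof -
  have "bounded_linear (\<lambda>X::real^'n^'n. X *v c)" using lin_mv linear_conv_bounded_linear by blast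
  then have "continuous_on UNIV (\<lambda>X::real^'n^'n. X *v c)" using linear_continuous_on by blast
  then show ?thesis by (intro continuous_intros)
qed

lemma closed_psd: "closed (psd_cone :: (real^'n^'n) set)"
proof -
  have eq: "psd_cone = (\<Inter>i. \<Inter>j. {X::real^'n^'n. X$i$j = X$j$i}) \<inter> (\<Inter>x. {X. 0 \<le> x \<bullet> (X *v x)})"
    by (auto simp: psd_cone_def vec_eq_iff transpose_def)
  have c1: "closed {X::real^'n^'n. X$i$j = X$j$i}" for i j
    by (intro closed_Collect_eq continuous_intros)
  have c2: "closed {X::real^'n^'n. 0 \<le> x \<bullet> (X *v x)}" for x
    by (intro closed_Collect_le continuous_intros cont_form)
  show ?thesis unfolding eq by (intro closed_Int closed_INT ballI c1 c2)
qed

lemma decomp_all: "X \<in> psd_cone \<Longrightarrow> \<exists>xs. X = sum_list (map outer xs)"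
  using decomp[of "UNIV" X] by simp

theorem corollary3p6:
  fixes a b c :: "real^'n"
  shows "ROG {X \<in> psd_cone. 0 \<le> a \<bullet> (X *v c) \<and> 0 \<le> b \<bullet> (X *v c)}"
proof -
  define S where "S = {X \<in> psd_cone. 0 \<le> a \<bullet> (X *v c) \<and> 0 \<le> b \<bullet> (X *v c)}"
  have outerS: "outer x \<in> S" if "x \<bullet> c = 0" for x
    using that by (simp add: S_def outer_psd outer_mult)
  have addS: "\<forall>X\<in>S. \<forall>Y\<in>S. X + Y \<in> S"
    by (auto simp: S_def psd_add matrix_vector_mult_add_rdistrib inner_add_right)
  have scS: "\<forall>X\<in>S. \<forall>t\<ge>0. t *\<^sub>R X \<in> S"
    by (auto simp: S_def psd_scale scaleR_matrix_vector_assoc[symmetric])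
  have cc: "convex S \<and> cone S" using addS scS convex_cone by blast
  have closedS: "closed S"
  proof -
    have "S = psd_cone \<inter> {X. 0 \<le> a \<bullet> (X *v c)} \<inter> {X. 0 \<le> b \<bullet> (X *v c)}"
      by (auto simp: S_def)
    moreover have "closed {X::real^'n^'n. 0 \<le> a \<bullet> (X *v c)}" "closed {X::real^'n^'n. 0 \<le> b \<bullet> (X *v c)}"
      by (intro closed_Collect_le continuous_intros cont_form)+
    ultimately show ?thesis using closed_psd by (metis closed_Int)
  qed
  define T where "T = S \<inter> rank_one_mats"
  have coneT: "cone T"
  proof (unfold cone_def, intro ballI allI impI)
    fix X and t :: real assume "X \<in> T" "0 \<le> t"
    then obtain x where "X = outer x" "X \<in> S" by (auto simp: T_def rank_one_mats_def)
    then have "t *\<^sub>R X \<in> S" "t *\<^sub>R X = outer (sqrt t *\<^sub>R x)" using scS \<open>0 \<le> t\<close> outer_scale[of t x] by (metis, simp)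
    then show "t *\<^sub>R X \<in> T" by (auto simp: T_def rank_one_mats_def)
  qed
  have zT: "0 \<in> T" using outerS[of 0] outer_zero by (auto simp: T_def rank_one_mats_def)
  have H: "convex (convex hull T) \<and> cone (convex hull T)"
    using coneT cone_convex_hull convex_convex_hull by blast
  have addH: "\<forall>X\<in>convex hull T. \<forall>Y\<in>convex hull T. X + Y \<in> convex hull T"
    using H convex_cone by blast
  have listH: "sum_list (map outer xs) \<in> convex hull T" if "\<forall>x\<in>set xs. outer x \<in> S" for xs
    using that
  proof (induction xs)
    case Nil then show ?case using zT hull_inc by fastforce
  next
    case (Cons x xs)
    have "outer x \<in> convex hull T" using Cons.prems by (intro hull_inc) (auto simp: T_def rank_one_mats_def)
    then show ?case using Cons addH by simp
  qed
  have main: "X \<in> convex hull T" if X: "X \<in> S" for X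
  proof -
    have Xp: "X \<in> psd_cone" using X by (simp add: S_def)
    show ?thesis
    proof (cases "c \<bullet> (X *v c) = 0")
      case True
      obtain xs where xs: "X = sum_list (map outer xs)" using decomp_all Xp by blast
      have "\<forall>x\<in>set xs. x \<bullet> c = 0" using True zero_each quad_sum xs by metis
      then show ?thesis using listH outerS xs by metis
    next
      case False
      then have sp: "0 < c \<bullet> (X *v c)" using Xp by (simp add: psd_cone_def order_less_le)
      define s where "s = c \<bullet> (X *v c)"
      define y where "y = (1 / sqrt (c \<bullet> (X *v c))) *\<^sub>R (X *v c)"
      note st = step[OF Xp sp y_def]
      obtain xs where xs: "X - outer y = sum_list (map outer xs)" using decomp_all st(1) by blast
      have "c \<bullet> ((X - outer y) *v c) = 0" using st(2) by simp
      then have "\<forall>x\<in>set xs. x \<bullet> c = 0" using zero_each quad_sum xs by metis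
      then have R: "X - outer y \<in> convex hull T" using listH outerS xs by metis
      have yS: "outer y \<in> S"
      proof -
        have "y \<bullet> c = sqrt s" using sp by (simp add: y_def s_def[symmetric] inner_commute real_div_sqrt)
        moreover have "a \<bullet> y = (a \<bullet> (X *v c)) / sqrt s" "b \<bullet> y = (b \<bullet> (X *v c)) / sqrt s"
          by (simp_all add: y_def s_def)
        ultimately show ?thesis using X sp
          by (auto simp: S_def outer_psd outer_mult s_def[symmetric] inner_commute)
      qed
      have "outer y \<in> convex hull T" using yS by (intro hull_inc) (auto simp: T_def rank_one_mats_def)
      then have "(X - outer y) + outer y \<in> convex hull T" using R addH by blast
      then show ?thesis by simp
    qed
  qed
  have "S = convex hull T"
  proof
    show "S \<subseteq> convex hull T" using main by blast
    show "convex hull T \<subseteq> S" using cc by (intro hull_minimal) (auto simp: T_def)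
  qed
  then show ?thesis unfolding ROG_def S_def[symmetric] T_def using cc closedS by (auto simp: S_def)
qed

end
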